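(* Let $\mathbb F\in\{\mathbb R,\mathbb C\}$ and let $\hat U,\tilde U:(0,1]\to GL_n(\mathbb F)$ be continuous. Suppose $\hat U$ contracts the Lie algebra $\mathfrak g$ (structure constants $c^k_{ij}$ in a fixed basis) to the algebra $\hat{\mathfrak g}$ (structure constants $\hat c^k_{ij}$) and $\tilde U$ contracts $\hat{\mathfrak g}$ to the algebra $\tilde{\mathfrak g}$ (structure constants $\tilde c^k_{ij}$). Then there exists a continuous monotonic function $f:(0,1]\to(0,1]$ with $f(\varepsilon)\to0$ as $\varepsilon\to0^+$ such that $\check U_\varepsilon=\hat U_{f(\varepsilon)}\tilde U_\varepsilon$ contracts $\mathfrak g$ to $\tilde{\mathfrak g}$.
   Context: A continuous $U:(0,1]\to GL_n(\mathbb F)$ contracts the algebra with structure constants $c^k_{ij}$ (in a fixed basis) to the algebra with structure constants $c'^{k'}_{i'j'}$ if $\lim_{\varepsilon\to0^+}(U_\varepsilon)^i_{i'}(U_\varepsilon)^j_{j'}(U^{-1}_\varepsilon)^{k'}_kc^k_{ij}=c'^{k'}_{i'j'}$ for all indices (summation over repeated indices). *)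

theory Defs
  imports "HOL-Analysis.Analysis"
begin

text \<open>Structure constants in a fixed basis indexed by the finite type 'n:
  c i j k stands for c^k_{ij}, i.e. [e_i, e_j] = sum_k c^k_{ij} e_k.\<close>

definition is_lie_structure_constants :: "('n::finite \<Rightarrow> 'n \<Rightarrow> 'n \<Rightarrow> 'a::comm_ring_1) \<Rightarrow> bool" where
  "is_lie_structure_constants c \<longleftrightarrow>
     (\<forall>i j k. c i j k = - c j i k) \<and>
     (\<forall>i j l m. (\<Sum>k\<in>UNIV. c i j k * c k l m + c j l k * c k i m + c l i k * c k j m) = 0)"

text \<open>U contracts the algebra with structure constants c to the algebra with structure
  constants c': U is a continuous map (0,1] -> GL_n(F) and
  lim_{eps->0+} U^i_{i'} U^j_{j'} (U^{-1})^{k'}_k c^k_{ij} = c'^{k'}_{i'j'}.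
  The entry (U)^i_{i'} is row i, column i', i.e. U $ i $ i'.\<close>

definition contracts ::
  "(real \<Rightarrow> 'a::{real_normed_field}^'n::finite^'n) \<Rightarrow> ('n \<Rightarrow> 'n \<Rightarrow> 'n \<Rightarrow> 'a) \<Rightarrow> ('n \<Rightarrow> 'n \<Rightarrow> 'n \<Rightarrow> 'a) \<Rightarrow> bool" where
  "contracts U c c' \<longleftrightarrow>
     continuous_on {0<..1} U \<and>
     (\<forall>e\<in>{0<..1}. invertible (U e)) \<and>
     (\<forall>i' j' k'.
        ((\<lambda>e. \<Sum>i\<in>UNIV. \<Sum>j\<in>UNIV. \<Sum>k\<in>UNIV.
              U e $ i $ i' * U e $ j $ j' * matrix_inv (U e) $ k' $ k * c i j k)
          \<longlongrightarrow> c' i' j' k') (at_right 0))"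

end

theory Submission
  imports Defs
begin


lemma lip_reg:
  fixes \<phi> :: "real \<Rightarrow> real"
  assumes pos: "\<And>e. e \<in> {0<..1} \<Longrightarrow> \<phi> e > 0"
    and mono: "\<And>e e'. e \<in> {0<..1} \<Longrightarrow> e' \<in> {0<..1} \<Longrightarrow> e \<le> e' \<Longrightarrow> \<phi> e \<le> \<phi> e'"
  shows "\<exists>f. continuous_on {0<..1} f \<and> mono_on {0<..1} f \<and>
     (\<forall>e\<in>{0<..1}. 0 < f e \<and> f e \<le> \<phi> e \<and> f e \<le> e)"
proof -
  define \<phi>' where "\<phi>' e = min (\<phi> e) e" for e
  have pos': "\<phi>' e > 0" if "e \<in> {0<..1}" for e using pos[OF that] that by (simp add: \<phi>'_def)
  have mono': "\<phi>' e \<le> \<phi>' e'" if "e \<in> {0<..1}" "e' \<in> {0<..1}" "e \<le> e'" for e e'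
    using mono[OF that] that by (auto simp: \<phi>'_def min_def)
  define f where "f e = Inf ((\<lambda>t. \<phi>' t + \<bar>e - t\<bar>) ` {0<..1})" for e
  have ne: "(\<lambda>t. \<phi>' t + \<bar>e - t\<bar>) ` {0<..1} \<noteq> {}" for e by auto
  have bdd: "bdd_below ((\<lambda>t. \<phi>' t + \<bar>e - t\<bar>) ` {0<..1})" for e
    proof (rule bdd_belowI[where m=0])
    fix x assume "x \<in> (\<lambda>t. \<phi>' t + \<bar>e - t\<bar>) ` {0<..1}"
    then obtain t :: real where "t \<in> {0<..1}" "x = \<phi>' t + \<bar>e - t\<bar>" by auto
    then show "0 \<le> x" using pos'[of t] by simp
  qed
  have low: "f e \<le> \<phi>' t + \<bar>e - t\<bar>" if "t \<in> {0<..1}" for e t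
    unfolding f_def by (rule cInf_lower[OF _ bdd]) (use that in auto)
  have grt: "c \<le> f e" if "\<And>t. t \<in> {0<..1} \<Longrightarrow> c \<le> \<phi>' t + \<bar>e - t\<bar>" for c e
    unfolding f_def by (rule cInf_greatest[OF ne]) (use that in auto)
  have lip: "f e \<le> f e' + \<bar>e - e'\<bar>" for e e'
  proof -
    have "f e - \<bar>e - e'\<bar> \<le> f e'"
    proof (rule grt)
      fix t :: real assume t: "t \<in> {0<..1}"
      have "f e \<le> \<phi>' t + \<bar>e - t\<bar>" by (rule low[OF t])
      then show "f e - \<bar>e - e'\<bar> \<le> \<phi>' t + \<bar>e' - t\<bar>" by linarith
    qed
    then show ?thesis by linarith
  qed
  have cont: "continuous_on {0<..1} f"
  proof (rule lipschitz_on_continuous_on[where L=1])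
    show "1-lipschitz_on {0<..1} f"
      unfolding lipschitz_on_def dist_real_def
      using lip by (smt (verit, best))
  qed
  have mon: "mono_on {0<..1} f"
  proof (rule mono_onI)
    fix e e' :: real assume e: "e \<in> {0<..1}" and e': "e' \<in> {0<..1}" and le: "e \<le> e'"
    show "f e \<le> f e'"
    proof (rule grt)
      fix t :: real assume t: "t \<in> {0<..1}"
      show "f e \<le> \<phi>' t + \<bar>e' - t\<bar>"
      proof (cases "t \<le> e")
        case True
        then show ?thesis using low[OF t, of e] le by linarith
      next
        case False
        have "f e \<le> \<phi>' e" using low[OF e, of e] by simp
        also have "\<dots> \<le> \<phi>' t" using mono'[OF e t] False by simp
        finally show ?thesis by linarith
      qed
    qed
  qed
  have props: "0 < f e \<and> f e \<le> \<phi> e \<and> f e \<le> e" if e: "e \<in> {0<..1}" for e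
  proof -
    have "f e \<le> \<phi>' e" using low[OF e, of e] by simp
    moreover have "min (\<phi>' (e/2)) (e/2) \<le> f e"
    proof (rule grt)
      fix t :: real assume t: "t \<in> {0<..1}"
      show "min (\<phi>' (e/2)) (e/2) \<le> \<phi>' t + \<bar>e - t\<bar>"
      proof (cases "t \<ge> e/2")
        case True
        then have "\<phi>' (e/2) \<le> \<phi>' t" using mono'[of "e/2" t] e t by auto
        then show ?thesis by auto
      next
        case False
        then show ?thesis using pos'[OF t] by auto
      qed
    qed
    moreover have "0 < min (\<phi>' (e/2)) (e/2)" using pos'[of "e/2"] e by auto
    ultimately show ?thesis by (auto simp: \<phi>'_def)
  qed
  show ?thesis using cont mon props by blast
qed

lemma construct:
  fixes M \<delta> :: "real \<Rightarrow> real"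
  assumes M: "continuous_on {0<..1} M" and \<delta>: "(\<delta> \<longlongrightarrow> 0) (at_right 0)"
  shows "\<exists>f. continuous_on {0<..1} f \<and> f ` {0<..1} \<subseteq> {0<..1} \<and> mono_on {0<..1} f \<and>
     (f \<longlongrightarrow> 0) (at_right 0) \<and> (\<forall>e\<in>{0<..1}. \<bar>M e\<bar> * \<bar>\<delta> (f e)\<bar> \<le> e)"
proof -
  define K where "K e = Sup ((\<lambda>t. \<bar>M t\<bar>) ` {e..1}) + 1" for e
  have bddK: "bdd_above ((\<lambda>t. \<bar>M t\<bar>) ` {e..1})" if "e \<in> {0<..1}" for e
  proof -
    have "continuous_on {e..1} (\<lambda>t. \<bar>M t\<bar>)"
      by (rule continuous_on_subset[of "{0<..1}"]) (use M that in \<open>auto intro: continuous_intros\<close>)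
    then have "compact ((\<lambda>t. \<bar>M t\<bar>) ` {e..1})" by (rule compact_continuous_image) simp
    then show ?thesis by (rule bounded_imp_bdd_above[OF compact_imp_bounded])
  qed
  have KM: "\<bar>M e\<bar> + 1 \<le> K e" if "e \<in> {0<..1}" for e
    unfolding K_def using that by (auto intro!: cSup_upper bddK)
  have Kpos: "K e > 0" if "e \<in> {0<..1}" for e using KM[OF that] by linarith
  have Kmono: "K e' \<le> K e" if "e \<in> {0<..1}" "e' \<in> {0<..1}" "e \<le> e'" for e e'
    unfolding K_def using that by (auto intro!: cSup_subset_mono bddK)
  define g where "g e = e / K e" for e
  have gpos: "g e > 0" if "e \<in> {0<..1}" for e using Kpos[OF that] that by (simp add: g_def)
  have gmono: "g e \<le> g e'" if "e \<in> {0<..1}" "e' \<in> {0<..1}" "e \<le> e'" for e e'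
  proof -
    have "e / K e \<le> e' / K e" using that Kpos[of e] by (simp add: divide_right_mono)
    also have "\<dots> \<le> e' / K e'" using that Kpos Kmono[OF that] by (simp add: divide_left_mono)
    finally show ?thesis by (simp add: g_def)
  qed
  define A where "A x = {s \<in> {0<..1::real}. \<forall>t\<in>{0<..s}. \<bar>\<delta> t\<bar> \<le> x}" for x
  have Ane: "A x \<noteq> {}" if "x > 0" for x
  proof -
    have "eventually (\<lambda>t. dist (\<delta> t) 0 < x) (at_right 0)"
      using \<delta> that by (rule tendstoD)
    then obtain b where b: "b > 0" "\<And>t. t > 0 \<Longrightarrow> t < b \<Longrightarrow> \<bar>\<delta> t\<bar> < x"
      unfolding eventually_at_right_field by auto
    have "min (b/2) 1 \<in> A x" unfolding A_def using b by force
    then show ?thesis by blast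
  qed
  have Abdd: "bdd_above (A x)" for x by (rule bdd_aboveI[where M=1]) (auto simp: A_def)
  define a where "a x = Sup (A x)" for x
  have apos: "a x > 0" "a x \<le> 1" if xpos: "x > 0" for x
  proof -
    obtain s where "s \<in> A x" using Ane[OF xpos] by blast
    then show "a x > 0" unfolding a_def using Abdd
      by (smt (verit, ccfv_SIG) A_def cSup_upper greaterThanAtMost_iff mem_Collect_eq)
    show "a x \<le> 1" unfolding a_def using Ane[OF xpos] by (intro cSup_least) (auto simp: A_def)
  qed
  have amono: "a x \<le> a y" if "0 < x" "x \<le> y" for x y
    unfolding a_def using that Ane[OF that(1)] Abdd by (intro cSup_subset_mono) (auto simp: A_def)
  have ainA: "s \<in> A x" if as: "x > 0" "0 < s" "s < a x" for x s
  proof -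
    obtain s' where "s' \<in> A x" "s < s'" using less_cSupE[of s "A x"] as Ane[OF as(1)] unfolding a_def by blast
    then show ?thesis using as unfolding A_def by auto
  qed
  define \<psi> where "\<psi> e = a (g e) / 2" for e
  have \<psi>pos: "\<psi> e > 0" if "e \<in> {0<..1}" for e using apos gpos that by (simp add: \<psi>_def)
  have \<psi>mono: "\<psi> e \<le> \<psi> e'" if "e \<in> {0<..1}" "e' \<in> {0<..1}" "e \<le> e'" for e e'
    using amono[OF gpos[OF that(1)] gmono[OF that]] by (simp add: \<psi>_def)
  obtain f where f: "continuous_on {0<..1} f" "mono_on {0<..1} f"
     "\<And>e. e\<in>{0<..1} \<Longrightarrow> 0 < f e \<and> f e \<le> \<psi> e \<and> f e \<le> e"
    using lip_reg[of \<psi>, OF \<psi>pos \<psi>mono] by blast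
  have img: "f ` {0<..1} \<subseteq> {0<..1}" using f(3) by fastforce
  have lim: "(f \<longlongrightarrow> 0) (at_right 0)"
  proof (rule tendsto_sandwich[of "\<lambda>_. 0" f _ "\<lambda>e. e"])
    show "\<forall>\<^sub>F n in at_right 0. 0 \<le> f n" "\<forall>\<^sub>F n in at_right 0. f n \<le> n"
      unfolding eventually_at_right_field
      by (intro exI[where x=1]; use f(3) in force)+
  qed (auto intro: tendsto_ident_at)
  have bound: "\<bar>M e\<bar> * \<bar>\<delta> (f e)\<bar> \<le> e" if e: "e \<in> {0<..1}" for e
  proof -
    have "f e \<in> A (g e)"
      using ainA[OF gpos[OF e], of "f e"] f(3)[OF e] apos(1)[OF gpos[OF e]] by (simp add: \<psi>_def)
    then have d: "\<bar>\<delta> (f e)\<bar> \<le> e / K e" unfolding A_def g_def by auto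
    have "\<bar>M e\<bar> * \<bar>\<delta> (f e)\<bar> \<le> K e * (e / K e)"
      using KM[OF e] d by (intro mult_mono) auto
    also have "\<dots> = e" using Kpos[OF e] by simp
    finally show ?thesis .
  qed
  show ?thesis using f img lim bound by blast
qed



lemma minv_props:
  fixes A :: "'a::semiring_1^'n^'n"
  assumes "invertible A"
  shows "A ** matrix_inv A = mat 1" "matrix_inv A ** A = mat 1"
proof -
  have "\<exists>A'. A ** A' = mat 1 \<and> A' ** A = mat 1" using assms unfolding invertible_def by blast
  then have "A ** matrix_inv A = mat 1 \<and> matrix_inv A ** A = mat 1"
    unfolding matrix_inv_def by (rule someI_ex)
  then show "A ** matrix_inv A = mat 1" "matrix_inv A ** A = mat 1" by auto
qed

lemma minv_unique:
  fixes A B :: "'a::semiring_1^'n^'n"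
  assumes "A ** B = mat 1" "B ** A = mat 1"
  shows "matrix_inv A = B"
proof -
  have inv: "invertible A" using assms unfolding invertible_def by blast
  have "matrix_inv A = matrix_inv A ** (A ** B)" by (simp add: assms)
  also have "\<dots> = (matrix_inv A ** A) ** B" by (simp add: matrix_mul_assoc)
  also have "\<dots> = B" by (simp add: minv_props[OF inv])
  finally show ?thesis .
qed

lemma minv_mult:
  fixes A B :: "'a::semiring_1^'n^'n"
  assumes "invertible A" "invertible B"
  shows "matrix_inv (A ** B) = matrix_inv B ** matrix_inv A"
proof (rule minv_unique)
  show "A ** B ** (matrix_inv B ** matrix_inv A) = mat 1"
    by (metis assms matrix_mul_assoc matrix_mul_rid minv_props(1))
  show "matrix_inv B ** matrix_inv A ** (A ** B) = mat 1"
    by (metis assms matrix_mul_assoc matrix_mul_rid minv_props(2))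
qed

lemma minv_entry:
  fixes A :: "'a::field^'n^'n"
  assumes "invertible A"
  shows "matrix_inv A $ k' $ k =
    det (\<chi> i j. if j = k' then (if i = k then 1 else 0) else A$i$j) / det A"
proof -
  define x where "x = (\<chi> r. matrix_inv A $ r $ k)"
  have Ax: "A *v x = (\<chi> i. if i = k then 1 else 0)"
  proof -
    have "A *v x = (\<chi> i. (A ** matrix_inv A) $ i $ k)"
      by (simp add: x_def matrix_vector_mult_def matrix_matrix_mult_def)
    also have "\<dots> = (\<chi> i. if i = k then 1 else 0)"
      by (simp add: minv_props[OF assms] mat_def)
    finally show ?thesis .
  qed
  have "det (\<chi> i j. if j = k' then (A *v x)$i else A$i$j) = x$k' * det A"
    by (rule cramer_lemma)
  moreover have "(\<chi> i j. if j = k' then (A *v x)$i else A$i$j) = (\<chi> i j. if j = k' then (if i = k then 1 else 0) else A$i$j)"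
    by (simp add: Ax vec_eq_iff)
  moreover have "det A \<noteq> 0" using assms invertible_det_nz by blast
  ultimately show ?thesis by (simp add: x_def field_simps)
qed

lemma continuous_on_det:
  fixes A :: "'b::topological_space \<Rightarrow> 'a::real_normed_field^'n^'n"
  assumes "continuous_on S A"
  shows "continuous_on S (\<lambda>x. det (A x))"
  unfolding det_def
  by (intro continuous_intros continuous_on_component assms)

lemma continuous_on_if_const:
  assumes "continuous_on S f"
  shows "continuous_on S (\<lambda>x. if P then c else f x)"
  using assms by (cases P) auto

lemma continuous_on_minv:
  fixes A :: "'b::topological_space \<Rightarrow> 'a::real_normed_field^'n^'n"
  assumes "continuous_on S A" "\<And>x. x \<in> S \<Longrightarrow> invertible (A x)"
  shows "continuous_on S (\<lambda>x. matrix_inv (A x) $ k' $ k)"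
proof -
  have "continuous_on S (\<lambda>x. det (\<chi> i j. if j = k' then (if i = k then 1 else 0) else A x$i$j) / det (A x))"
    using assms(2) invertible_det_nz
    by (intro continuous_intros continuous_on_det continuous_on_vec_lambda continuous_on_component assms(1))
       (auto intro!: continuous_on_if_const continuous_on_component assms(1))
  then show ?thesis
    by (rule continuous_on_cong[THEN iffD1, rotated 2]) (auto simp: minv_entry assms(2))
qed

lemma continuous_on_mmult:
  fixes A B :: "'b::topological_space \<Rightarrow> 'a::real_normed_field^'n^'n"
  assumes "continuous_on S A" "continuous_on S B"
  shows "continuous_on S (\<lambda>x. A x ** B x)"
  unfolding matrix_matrix_mult_def
  by (intro continuous_intros continuous_on_vec_lambda continuous_on_component assms)



lemma swap_in3:
  fixes G :: "'k \<Rightarrow> 'd \<Rightarrow> 'b \<Rightarrow> 'a \<Rightarrow> 'r::comm_monoid_add"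
  shows "(\<Sum>k\<in>K. \<Sum>d\<in>D. \<Sum>b\<in>B. \<Sum>a\<in>A. G k d b a) = (\<Sum>a\<in>A. \<Sum>b\<in>B. \<Sum>d\<in>D. \<Sum>k\<in>K. G k d b a)"
proof -
  have "(\<Sum>k\<in>K. \<Sum>d\<in>D. \<Sum>b\<in>B. \<Sum>a\<in>A. G k d b a) = (\<Sum>k\<in>K. \<Sum>d\<in>D. \<Sum>a\<in>A. \<Sum>b\<in>B. G k d b a)"
    by (intro sum.cong refl sum.swap)
  also have "\<dots> = (\<Sum>k\<in>K. \<Sum>a\<in>A. \<Sum>d\<in>D. \<Sum>b\<in>B. G k d b a)"
    by (intro sum.cong refl sum.swap)
  also have "\<dots> = (\<Sum>a\<in>A. \<Sum>k\<in>K. \<Sum>d\<in>D. \<Sum>b\<in>B. G k d b a)"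
    by (rule sum.swap)
  also have "\<dots> = (\<Sum>a\<in>A. \<Sum>d\<in>D. \<Sum>k\<in>K. \<Sum>b\<in>B. G k d b a)"
    by (intro sum.cong refl sum.swap)
  also have "\<dots> = (\<Sum>a\<in>A. \<Sum>d\<in>D. \<Sum>b\<in>B. \<Sum>k\<in>K. G k d b a)"
    by (intro sum.cong refl sum.swap)
  also have "\<dots> = (\<Sum>a\<in>A. \<Sum>b\<in>B. \<Sum>d\<in>D. \<Sum>k\<in>K. G k d b a)"
    by (intro sum.cong refl sum.swap)
  finally show ?thesis .
qed

lemma swap6:
  fixes F :: "'n \<Rightarrow> 'n \<Rightarrow> 'n \<Rightarrow> 'n \<Rightarrow> 'n \<Rightarrow> 'n \<Rightarrow> 'r::comm_monoid_add"
  shows "(\<Sum>i\<in>S. \<Sum>j\<in>S. \<Sum>k\<in>S. \<Sum>d\<in>S. \<Sum>b\<in>S. \<Sum>a\<in>S. F i j k a b d)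
       = (\<Sum>a\<in>S. \<Sum>b\<in>S. \<Sum>d\<in>S. \<Sum>i\<in>S. \<Sum>j\<in>S. \<Sum>k\<in>S. F i j k a b d)"
proof -
  have "(\<Sum>i\<in>S. \<Sum>j\<in>S. \<Sum>k\<in>S. \<Sum>d\<in>S. \<Sum>b\<in>S. \<Sum>a\<in>S. F i j k a b d)
      = (\<Sum>i\<in>S. \<Sum>j\<in>S. \<Sum>a\<in>S. \<Sum>b\<in>S. \<Sum>d\<in>S. \<Sum>k\<in>S. F i j k a b d)"
    by (rule sum.cong[OF refl], rule sum.cong[OF refl], rule swap_in3)
  also have "\<dots> = (\<Sum>i\<in>S. \<Sum>d\<in>S. \<Sum>b\<in>S. \<Sum>a\<in>S. \<Sum>j\<in>S. \<Sum>k\<in>S. F i j k a b d)"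
    by (rule sum.cong[OF refl], rule swap_in3)
  also have "\<dots> = (\<Sum>a\<in>S. \<Sum>b\<in>S. \<Sum>d\<in>S. \<Sum>i\<in>S. \<Sum>j\<in>S. \<Sum>k\<in>S. F i j k a b d)"
    by (rule swap_in3)
  finally show ?thesis .
qed


definition tsc :: "'a::field^'n::finite^'n \<Rightarrow> ('n\<Rightarrow>'n\<Rightarrow>'n\<Rightarrow>'a) \<Rightarrow> ('n\<Rightarrow>'n\<Rightarrow>'n\<Rightarrow>'a)" where
  "tsc U c i' j' k' = (\<Sum>i\<in>UNIV. \<Sum>j\<in>UNIV. \<Sum>k\<in>UNIV. U$i$i' * U$j$j' * matrix_inv U $k'$k * c i j k)"

lemma tsc_gen:
  fixes A B Ai Bi :: "'a::field^'n::finite^'n"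
  shows "(\<Sum>i\<in>UNIV. \<Sum>j\<in>UNIV. \<Sum>k\<in>UNIV. (A**B)$i$i' * (A**B)$j$j' * (Bi ** Ai) $k'$k * c i j k)
    = (\<Sum>a\<in>UNIV. \<Sum>b\<in>UNIV. \<Sum>d\<in>UNIV. B$a$i' * B$b$j' * Bi $k'$d *
         (\<Sum>i\<in>UNIV. \<Sum>j\<in>UNIV. \<Sum>k\<in>UNIV. A$i$a * A$j$b * Ai $d$k * c i j k))"
  apply (simp add: matrix_matrix_mult_def sum_distrib_left sum_distrib_right)
  apply (subst swap6)
  apply (intro sum.cong refl)
  apply (simp add: mult_ac)
  done


lemma tsc_comp:
  fixes A B :: "'a::field^'n::finite^'n"
  assumes "invertible A" "invertible B"
  shows "tsc (A ** B) c i' j' k' = tsc B (tsc A c) i' j' k'"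
  unfolding tsc_def minv_mult[OF assms] tsc_gen ..

lemma tsc_diff:
  fixes U :: "'a::field^'n::finite^'n"
  shows "tsc U c i' j' k' - tsc U c' i' j' k' = tsc U (\<lambda>i j k. c i j k - c' i j k) i' j' k'"
  unfolding tsc_def by (simp add: sum_subtractf[symmetric] right_diff_distrib)

definition nrm :: "'a::real_normed_field^'n::finite^'n \<Rightarrow> real" where
  "nrm U = (\<Sum>a\<in>UNIV. \<Sum>b\<in>UNIV. norm (U$a$b)) + (\<Sum>a\<in>UNIV. \<Sum>b\<in>UNIV. norm (matrix_inv U$a$b))"

lemma norm_sum3:
  fixes f :: "'i \<Rightarrow> 'j \<Rightarrow> 'k \<Rightarrow> 'a::real_normed_vector"
  shows "norm (\<Sum>i\<in>I. \<Sum>j\<in>J. \<Sum>k\<in>K. f i j k) \<le> (\<Sum>i\<in>I. \<Sum>j\<in>J. \<Sum>k\<in>K. norm (f i j k))"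
proof -
  have "norm (\<Sum>i\<in>I. \<Sum>j\<in>J. \<Sum>k\<in>K. f i j k) \<le> (\<Sum>i\<in>I. norm (\<Sum>j\<in>J. \<Sum>k\<in>K. f i j k))"
    by (rule norm_sum)
  also have "\<dots> \<le> (\<Sum>i\<in>I. \<Sum>j\<in>J. norm (\<Sum>k\<in>K. f i j k))"
    by (intro sum_mono norm_sum)
  also have "\<dots> \<le> (\<Sum>i\<in>I. \<Sum>j\<in>J. \<Sum>k\<in>K. norm (f i j k))"
    by (intro sum_mono norm_sum)
  finally show ?thesis .
qed

lemma tsc_bound:
  fixes U :: "'a::real_normed_field^'n::finite^'n"
  shows "norm (tsc U d i' j' k') \<le> (nrm U)^3 * (\<Sum>i\<in>UNIV. \<Sum>j\<in>UNIV. \<Sum>k\<in>UNIV. norm (d i j k))"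
proof -
  have e1: "norm (U$a$b) \<le> nrm U" for a b
  proof -
    have "norm (U$a$b) \<le> (\<Sum>b\<in>UNIV. norm (U$a$b))" by (rule member_le_sum) auto
    also have "\<dots> \<le> (\<Sum>a\<in>UNIV. \<Sum>b\<in>UNIV. norm (U$a$b))"
      by (rule member_le_sum[where f="\<lambda>a. \<Sum>b\<in>UNIV. norm (U$a$b)"]) (auto intro: sum_nonneg)
    also have "\<dots> \<le> nrm U" unfolding nrm_def by (simp add: sum_nonneg)
    finally show ?thesis .
  qed
  have e2: "norm (matrix_inv U$a$b) \<le> nrm U" for a b
  proof -
    have "norm (matrix_inv U$a$b) \<le> (\<Sum>b\<in>UNIV. norm (matrix_inv U$a$b))" by (rule member_le_sum) auto
    also have "\<dots> \<le> (\<Sum>a\<in>UNIV. \<Sum>b\<in>UNIV. norm (matrix_inv U$a$b))"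
      by (rule member_le_sum[where f="\<lambda>a. \<Sum>b\<in>UNIV. norm (matrix_inv U$a$b)"]) (auto intro: sum_nonneg)
    also have "\<dots> \<le> nrm U" unfolding nrm_def by (simp add: sum_nonneg)
    finally show ?thesis .
  qed
  have n0: "0 \<le> nrm U" unfolding nrm_def by (intro add_nonneg_nonneg sum_nonneg) auto
  have "norm (tsc U d i' j' k') \<le> (\<Sum>i\<in>UNIV. \<Sum>j\<in>UNIV. \<Sum>k\<in>UNIV.
      norm (U$i$i' * U$j$j' * matrix_inv U $k'$k * d i j k))"
    unfolding tsc_def by (rule norm_sum3)
  also have "\<dots> \<le> (\<Sum>i\<in>UNIV. \<Sum>j\<in>UNIV. \<Sum>k\<in>UNIV. (nrm U)^3 * norm (d i j k))"
  proof (intro sum_mono)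
    fix i j k
    have "norm (U$i$i') * norm (U$j$j') * norm (matrix_inv U $k'$k) * norm (d i j k)
       \<le> nrm U * nrm U * nrm U * norm (d i j k)"
      by (intro mult_right_mono mult_mono e1 e2) (auto simp: n0)
    then show "norm (U$i$i' * U$j$j' * matrix_inv U $k'$k * d i j k) \<le> (nrm U)^3 * norm (d i j k)"
      by (simp add: norm_mult power3_eq_cube)
  qed
  also have "\<dots> = (nrm U)^3 * (\<Sum>i\<in>UNIV. \<Sum>j\<in>UNIV. \<Sum>k\<in>UNIV. norm (d i j k))"
    by (simp add: sum_distrib_left)
  finally show ?thesis .
qed

lemma contracts_tsc:
  "contracts U c c' \<longleftrightarrow> continuous_on {0<..1} U \<and> (\<forall>e\<in>{0<..1}. invertible (U e)) \<and>
     (\<forall>i' j' k'. ((\<lambda>e. tsc (U e) c i' j' k') \<longlongrightarrow> c' i' j' k') (at_right 0))"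
  unfolding contracts_def tsc_def ..

lemma main_gen:
  fixes Uh Ut :: "real \<Rightarrow> 'a::real_normed_field^'n::finite^'n"
  assumes h: "contracts Uh c ch" and t: "contracts Ut ch ct"
  shows "\<exists>f :: real \<Rightarrow> real.
         continuous_on {0<..1} f \<and> f ` {0<..1} \<subseteq> {0<..1} \<and> mono_on {0<..1} f \<and>
         (f \<longlongrightarrow> 0) (at_right 0) \<and>
         contracts (\<lambda>e. Uh (f e) ** Ut e) c ct"
proof -
  have hc: "continuous_on {0<..1} Uh" and hi: "\<And>e. e\<in>{0<..1} \<Longrightarrow> invertible (Uh e)"
    and hl: "\<And>i' j' k'. ((\<lambda>e. tsc (Uh e) c i' j' k') \<longlongrightarrow> ch i' j' k') (at_right 0)"
    using h unfolding contracts_tsc by auto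
  have tc: "continuous_on {0<..1} Ut" and ti: "\<And>e. e\<in>{0<..1} \<Longrightarrow> invertible (Ut e)"
    and tl: "\<And>i' j' k'. ((\<lambda>e. tsc (Ut e) ch i' j' k') \<longlongrightarrow> ct i' j' k') (at_right 0)"
    using t unfolding contracts_tsc by auto
  define \<delta> where "\<delta> s = (\<Sum>i\<in>UNIV. \<Sum>j\<in>UNIV. \<Sum>k\<in>UNIV. norm (tsc (Uh s) c i j k - ch i j k))" for s
  have \<delta>0: "\<delta> s \<ge> 0" for s unfolding \<delta>_def by (intro sum_nonneg) auto
  have \<delta>lim: "(\<delta> \<longlongrightarrow> 0) (at_right 0)"
  proof -
    have "((\<lambda>s. \<Sum>i\<in>UNIV. \<Sum>j\<in>UNIV. \<Sum>k\<in>UNIV. norm (tsc (Uh s) c i j k - ch i j k))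
      \<longlongrightarrow> (\<Sum>i\<in>(UNIV::'n set). \<Sum>j\<in>(UNIV::'n set). \<Sum>k\<in>(UNIV::'n set). norm (ch i j k - ch i j k))) (at_right 0)"
      by (intro tendsto_intros hl)
    then show ?thesis unfolding \<delta>_def by simp
  qed
  define M where "M e = (nrm (Ut e))^3" for e
  have M0: "M e \<ge> 0" for e unfolding M_def nrm_def by (intro zero_le_power add_nonneg_nonneg sum_nonneg) auto
  have Mc: "continuous_on {0<..1} M"
    unfolding M_def nrm_def
    by (intro continuous_intros continuous_on_minv continuous_on_component tc ti)
  obtain f where f: "continuous_on {0<..1} f" "f ` {0<..1} \<subseteq> {0<..1}" "mono_on {0<..1} f"
     "(f \<longlongrightarrow> 0) (at_right 0)" "\<And>e. e\<in>{0<..1} \<Longrightarrow> \<bar>M e\<bar> * \<bar>\<delta> (f e)\<bar> \<le> e"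
    using construct[OF Mc \<delta>lim] by blast
  have fin: "f e \<in> {0<..1}" if "e \<in> {0<..1}" for e using f(2) that by blast
  have ev01: "eventually (\<lambda>e. e \<in> {0<..1}) (at_right (0::real))"
    unfolding eventually_at_right_field by (intro exI[where x=1]) auto
  have cont: "continuous_on {0<..1} (\<lambda>e. Uh (f e) ** Ut e)"
    by (intro continuous_on_mmult tc continuous_on_compose2[OF hc f(1) f(2)])
  have inv: "\<forall>e\<in>{0<..1}. invertible (Uh (f e) ** Ut e)"
    using hi ti fin invertible_mult by blast
  have lim: "((\<lambda>e. tsc (Uh (f e) ** Ut e) c i' j' k') \<longlongrightarrow> ct i' j' k') (at_right 0)" for i' j' k'
  proof -
    define R where "R e = tsc (Ut e) (\<lambda>i j k. tsc (Uh (f e)) c i j k - ch i j k) i' j' k'" for e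
    have eq: "eventually (\<lambda>e. tsc (Ut e) ch i' j' k' + R e = tsc (Uh (f e) ** Ut e) c i' j' k') (at_right 0)"
      using ev01
    proof (rule eventually_mono)
      fix e :: real assume e: "e \<in> {0<..1}"
      have "tsc (Uh (f e) ** Ut e) c i' j' k' = tsc (Ut e) (tsc (Uh (f e)) c) i' j' k'"
        by (rule tsc_comp[OF hi[OF fin[OF e]] ti[OF e]])
      also have "\<dots> = tsc (Ut e) ch i' j' k' + R e"
        unfolding R_def tsc_diff[symmetric] by simp
      finally show "tsc (Ut e) ch i' j' k' + R e = tsc (Uh (f e) ** Ut e) c i' j' k'" by simp
    qed
    have R0: "(R \<longlongrightarrow> 0) (at_right 0)"
    proof (rule Lim_null_comparison)
      show "eventually (\<lambda>e. norm (R e) \<le> e) (at_right 0)"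
        using ev01
      proof (rule eventually_mono)
        fix e :: real assume e: "e \<in> {0<..1}"
        have "norm (R e) \<le> M e * \<delta> (f e)"
          unfolding R_def M_def \<delta>_def by (rule tsc_bound)
        also have "\<dots> = \<bar>M e\<bar> * \<bar>\<delta> (f e)\<bar>" using M0 \<delta>0 by simp
        also have "\<dots> \<le> e" by (rule f(5)[OF e])
        finally show "norm (R e) \<le> e" .
      qed
    qed (rule tendsto_ident_at)
    have "((\<lambda>e. tsc (Ut e) ch i' j' k' + R e) \<longlongrightarrow> ct i' j' k' + 0) (at_right 0)"
      by (intro tendsto_add tl R0)
    then show ?thesis using eq by (simp add: Lim_transform_eventually)
  qed
  have "contracts (\<lambda>e. Uh (f e) ** Ut e) c ct"
    unfolding contracts_tsc using cont inv lim by blast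
  then show ?thesis using f by blast
qed

theorem mainTheorem11:
  shows
  "(\<forall>(Uh :: real \<Rightarrow> real^'n::finite^'n) (Ut :: real \<Rightarrow> real^'n^'n)
       (c :: 'n \<Rightarrow> 'n \<Rightarrow> 'n \<Rightarrow> real) ch ct.
      is_lie_structure_constants c \<and> contracts Uh c ch \<and> contracts Ut ch ct \<longrightarrow>
      (\<exists>f :: real \<Rightarrow> real.
         continuous_on {0<..1} f \<and> f ` {0<..1} \<subseteq> {0<..1} \<and> mono_on {0<..1} f \<and>
         (f \<longlongrightarrow> 0) (at_right 0) \<and>
         contracts (\<lambda>e. Uh (f e) ** Ut e) c ct))
   \<and>
   (\<forall>(Uh :: real \<Rightarrow> complex^'n^'n) (Ut :: real \<Rightarrow> complex^'n^'n)
       (c :: 'n \<Rightarrow> 'n \<Rightarrow> 'n \<Rightarrow> complex) ch ct.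
      is_lie_structure_constants c \<and> contracts Uh c ch \<and> contracts Ut ch ct \<longrightarrow>
      (\<exists>f :: real \<Rightarrow> real.
         continuous_on {0<..1} f \<and> f ` {0<..1} \<subseteq> {0<..1} \<and> mono_on {0<..1} f \<and>
         (f \<longlongrightarrow> 0) (at_right 0) \<and>
         contracts (\<lambda>e. Uh (f e) ** Ut e) c ct))"
proof (intro conjI allI impI)
  fix Uh Ut :: "real \<Rightarrow> real^'n^'n" and c ch ct :: "'n \<Rightarrow> 'n \<Rightarrow> 'n \<Rightarrow> real"
  assume a: "is_lie_structure_constants c \<and> contracts Uh c ch \<and> contracts Ut ch ct"
  show "\<exists>f :: real \<Rightarrow> real.
         continuous_on {0<..1} f \<and> f ` {0<..1} \<subseteq> {0<..1} \<and> mono_on {0<..1} f \<and>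
         (f \<longlongrightarrow> 0) (at_right 0) \<and> contracts (\<lambda>e. Uh (f e) ** Ut e) c ct"
    using a by (intro main_gen) auto
next
  fix Uh Ut :: "real \<Rightarrow> complex^'n^'n" and c ch ct :: "'n \<Rightarrow> 'n \<Rightarrow> 'n \<Rightarrow> complex"
  assume a: "is_lie_structure_constants c \<and> contracts Uh c ch \<and> contracts Ut ch ct"
  show "\<exists>f :: real \<Rightarrow> real.
         continuous_on {0<..1} f \<and> f ` {0<..1} \<subseteq> {0<..1} \<and> mono_on {0<..1} f \<and>
         (f \<longlongrightarrow> 0) (at_right 0) \<and> contracts (\<lambda>e. Uh (f e) ** Ut e) c ct"
    using a by (intro main_gen) auto
qed

end
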